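(* For any test-fee structure $(G,\phi)$ with $\phi_d<0$ or $\phi_t<0$, there exists a test-fee structure $(G',\phi')$ with $\phi'_t\ge0$ and $\phi'_d\ge0$ such that $R(G,\phi)<R(G',\phi')$.
   Context: The asset value $\theta\sim F$ with support in $[\underline{\theta},\overline{\theta}]$ ($0\le\underline{\theta}<\overline{\theta}<\infty$ the extreme support points) and mean $\mu$. $\Gamma(F)$ is the set of mean-preserving contractions of $F$ (CDFs $G$ on $[\underline{\theta},\overline{\theta}]$ with $\int_{\underline{\theta}}^x G\le\int_{\underline{\theta}}^x F$ for all $x$, equality at $\overline{\theta}$), equivalently the score distributions of unbiased tests. A test-fee structure is $(G,\phi)$ with $G\in\Gamma(F)$, $\phi=(\phi_t,\phi_d)\in\mathbb{R}^2$. In the induced game the agent, not observing $\theta$, decides whether to pay $\phi_t$ to privately observe a score $s\sim G$, then whether to pay $\phi_d$ to verifiably disclose it to two buyers who otherwise see a null message; buyers bid in a first-price auction; the agent gets price minus fees. Equilibrium is perfect Bayesian equilibrium. With $\sigma_t$ the testing probability and $\sigma_d(s)$ the disclosure probability, the intermediary's revenue is $\sigma_t(\phi_t+\phi_d\int\sigma_d\,dG)$, and $R(G,\phi)$ is the infimum of this revenue over all equilibria. *)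

theory Defs
  imports "HOL-Probability.Probability"
begin

definition dist_on :: "real \<Rightarrow> real \<Rightarrow> real measure \<Rightarrow> bool" where
  "dist_on a b M \<longleftrightarrow> prob_space M \<and> sets M = sets borel \<and> measure M {a..b} = 1"

(* Standing assumptions on the asset-value distribution F:
   support in [a,b], 0 <= a < b, and a, b are the extreme support points. *)
definition asset_dist :: "real \<Rightarrow> real \<Rightarrow> real measure \<Rightarrow> bool" where
  "asset_dist a b F \<longleftrightarrow> 0 \<le> a \<and> a < b \<and> dist_on a b F \<and>
     (\<forall>e>0. measure F {a..<a+e} > 0 \<and> measure F {b-e<..b} > 0)"

(* Gamma(F): mean-preserving contractions of F (via the CDFs). *)
definition MPC :: "real \<Rightarrow> real \<Rightarrow> real measure \<Rightarrow> real measure \<Rightarrow> bool" where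
  "MPC a b F G \<longleftrightarrow> dist_on a b G \<and>
     (\<forall>x\<in>{a..b}. integral {a..x} (cdf G) \<le> integral {a..x} (cdf F)) \<and>
     integral {a..b} (cdf G) = integral {a..b} (cdf F)"

(* Perfect Bayesian equilibrium of the induced game, in reduced form:
   st = testing probability, sd = disclosure strategy (score -> probability),
   beta = the price (buyers' posterior mean) after the null message.
   A disclosed score s yields price s (unbiased test; two-buyer first-price
   auction with common value yields price = posterior mean). *)
definition equilibrium ::
  "real \<Rightarrow> real \<Rightarrow> real measure \<Rightarrow> real measure \<Rightarrow> real \<Rightarrow> real \<Rightarrow>
   real \<Rightarrow> (real \<Rightarrow> real) \<Rightarrow> real \<Rightarrow> bool" where
  "equilibrium a b F G pt pd st sd beta \<longleftrightarrow>
     st \<in> {0..1} \<and> sd \<in> borel_measurable borel \<and> (\<forall>s. sd s \<in> {0..1}) \<and>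
     (\<forall>s. s - pd > beta \<longrightarrow> sd s = 1) \<and>
     (\<forall>s. s - pd < beta \<longrightarrow> sd s = 0) \<and>
     (let VT = - pt + (\<integral>s. sd s * (s - pd) + (1 - sd s) * beta \<partial>G) in
        (st > 0 \<longrightarrow> VT \<ge> beta) \<and> (st < 1 \<longrightarrow> VT \<le> beta)) \<and>
     beta \<in> {a..b} \<and>
     (let pn = (1 - st) + st * (\<integral>s. 1 - sd s \<partial>G) in
        pn > 0 \<longrightarrow>
        beta = ((1 - st) * (\<integral>x. x \<partial>F) + st * (\<integral>s. s * (1 - sd s) \<partial>G)) / pn)"

definition revenue :: "real measure \<Rightarrow> real \<Rightarrow> real \<Rightarrow> real \<Rightarrow> (real \<Rightarrow> real) \<Rightarrow> real" where
  "revenue G pt pd st sd = st * (pt + pd * (\<integral>s. sd s \<partial>G))"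

definition R :: "real \<Rightarrow> real \<Rightarrow> real measure \<Rightarrow> real measure \<Rightarrow> real \<Rightarrow> real \<Rightarrow> real" where
  "R a b F G pt pd = Inf {revenue G pt pd st sd | st sd beta. equilibrium a b F G pt pd st sd beta}"

end

theory Submission
  imports Defs
begin


lemma dist_ps: "dist_on a b M \<Longrightarrow> prob_space M" by (simp add: dist_on_def)
lemma dist_sets: "dist_on a b M \<Longrightarrow> sets M = sets borel" by (simp add: dist_on_def)

lemma dist_AE: assumes "dist_on a b M" shows "AE x in M. x \<in> {a..b}"
proof -
  interpret prob_space M using assms by (simp add: dist_on_def)
  show ?thesis using assms by (intro AE_prob_1) (simp add: dist_on_def)
qed

lemma dist_meas: fixes f :: "real \<Rightarrow> real" assumes "dist_on a b M" "f \<in> borel_measurable borel" shows "f \<in> borel_measurable M"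
proof -
  have "(borel_measurable M :: (real \<Rightarrow> real) set) = borel_measurable borel"
    using measurable_cong_sets[of M borel borel borel] assms by (simp add: dist_on_def)
  then show ?thesis using assms by simp
qed

lemma dist_int:
  assumes "dist_on a b M" "f \<in> borel_measurable borel" "\<And>x. x \<in> {a..b} \<Longrightarrow> \<bar>f x\<bar> \<le> C"
  shows "integrable M (f :: real \<Rightarrow> real)"
proof -
  interpret prob_space M using assms by (simp add: dist_on_def)
  show ?thesis
  proof (rule integrable_const_bound[where B=C])
    show "AE x in M. norm (f x) \<le> C" using dist_AE[OF assms(1)] assms(3) by auto
    show "f \<in> borel_measurable M" using dist_meas assms by blast
  qed
qed

definition P :: "real measure \<Rightarrow> real \<Rightarrow> real" where
  "P M c = (\<integral>s. max (s - c) 0 \<partial>M)"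

lemma int_max: "dist_on a b M \<Longrightarrow> integrable M (\<lambda>s. max (s - c) 0)"
  by (rule dist_int[where C="\<bar>b\<bar> + \<bar>a\<bar> + \<bar>c\<bar>"]) auto

lemma int_id: "dist_on a b M \<Longrightarrow> integrable M (\<lambda>s. s)"
  by (rule dist_int[where C="\<bar>b\<bar> + \<bar>a\<bar>"]) auto

lemma P_nonneg: "P M c \<ge> 0"
  unfolding P_def by (rule integral_nonneg_AE) auto

lemma P_mono: assumes "dist_on a b M" "c \<le> d" shows "P M d \<le> P M c"
  unfolding P_def using assms by (intro integral_mono int_max) auto

lemma sd_int: fixes sd :: "real \<Rightarrow> real" assumes "dist_on a b M" "sd \<in> borel_measurable borel" "\<forall>s. sd s \<in> {0..1}"
  shows "integrable M sd"
  by (rule dist_int[where C=1]) (use assms in auto)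

lemma sd_int_bounds: fixes sd :: "real \<Rightarrow> real" assumes "dist_on a b M" "sd \<in> borel_measurable borel" "\<forall>s. sd s \<in> {0..1}"
  shows "(\<integral>s. sd s \<partial>M) \<in> {0..1}"
proof -
  interpret prob_space M using assms by (simp add: dist_on_def)
  have "(\<integral>s. sd s \<partial>M) \<le> (\<integral>s. 1 \<partial>M)"
    using assms by (intro integral_mono sd_int) (auto simp: prob_space)
  moreover have "(\<integral>s. sd s \<partial>M) \<ge> 0" using assms by (intro integral_nonneg_AE) auto
  ultimately show ?thesis by (simp add: prob_space)
qed

lemma VT_eq: fixes sd :: "real \<Rightarrow> real"
  assumes "dist_on a b M" "sd \<in> borel_measurable borel" "\<forall>s. sd s \<in> {0..1}"
    "\<forall>s. s - pd > beta \<longrightarrow> sd s = 1" "\<forall>s. s - pd < beta \<longrightarrow> sd s = 0"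
  shows "(\<integral>s. sd s * (s - pd) + (1 - sd s) * beta \<partial>M) = beta + P M (beta + pd)"
proof -
  interpret prob_space M using assms by (simp add: dist_on_def)
  have pw: "sd s * (s - pd) + (1 - sd s) * beta = beta + max (s - (beta + pd)) 0" for s
  proof (cases "s - pd > beta")
    case True then show ?thesis using assms(4) by auto
  next
    case False
    show ?thesis
    proof (cases "s - pd < beta")
      case True then show ?thesis using assms(5) by auto
    next
      case False2: False
      then have "s - pd = beta" using False by auto
      then show ?thesis by (auto simp: algebra_simps)
    qed
  qed
  have "(\<integral>s. sd s * (s - pd) + (1 - sd s) * beta \<partial>M) = (\<integral>s. beta + max (s - (beta + pd)) 0 \<partial>M)"
    using pw by simp
  also have "\<dots> = beta + P M (beta + pd)"
    unfolding P_def using int_max[OF assms(1)] by (simp add: prob_space)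
  finally show ?thesis .
qed



lemma int_sg: fixes g :: "real \<Rightarrow> real"
  assumes "dist_on a b M" "g \<in> borel_measurable borel" "\<forall>s. g s \<in> {0..1}"
  shows "integrable M (\<lambda>s. s * g s)"
proof (rule dist_int[OF assms(1), where C="\<bar>a\<bar> + \<bar>b\<bar>"])
  show "(\<lambda>s. s * g s) \<in> borel_measurable borel" using assms by measurable
  fix x :: real assume x: "x \<in> {a..b}"
  have "\<bar>x * g x\<bar> = \<bar>x\<bar> * \<bar>g x\<bar>" by (simp add: abs_mult)
  also have "\<dots> \<le> \<bar>x\<bar> * 1" using assms(3) by (intro mult_left_mono) auto
  also have "\<dots> \<le> \<bar>a\<bar> + \<bar>b\<bar>" using x by auto
  finally show "\<bar>x * g x\<bar> \<le> \<bar>a\<bar> + \<bar>b\<bar>" .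
qed

lemma mu_ab: assumes "dist_on a b M" shows "(\<integral>x. x \<partial>M) \<in> {a..b}"
proof -
  interpret prob_space M using assms by (simp add: dist_on_def)
  have "(\<integral>x. a \<partial>M) \<le> (\<integral>x. x \<partial>M)"
    using dist_AE[OF assms] int_id[OF assms] by (intro integral_mono_AE) auto
  moreover have "(\<integral>x. x \<partial>M) \<le> (\<integral>x. b \<partial>M)"
    using dist_AE[OF assms] int_id[OF assms] by (intro integral_mono_AE) auto
  ultimately show ?thesis by (simp add: prob_space)
qed

lemma eq_def2: "equilibrium a b F G pt pd st sd beta \<longleftrightarrow>
     st \<in> {0..1} \<and> sd \<in> borel_measurable borel \<and> (\<forall>s. sd s \<in> {0..1}) \<and>
     (\<forall>s. s - pd > beta \<longrightarrow> sd s = 1) \<and>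
     (\<forall>s. s - pd < beta \<longrightarrow> sd s = 0) \<and>
     (st > 0 \<longrightarrow> - pt + (\<integral>s. sd s * (s - pd) + (1 - sd s) * beta \<partial>G) \<ge> beta) \<and>
     (st < 1 \<longrightarrow> - pt + (\<integral>s. sd s * (s - pd) + (1 - sd s) * beta \<partial>G) \<le> beta) \<and>
     beta \<in> {a..b} \<and>
     ((1 - st) + st * (\<integral>s. 1 - sd s \<partial>G) > 0 \<longrightarrow>
        beta = ((1 - st) * (\<integral>x. x \<partial>F) + st * (\<integral>s. s * (1 - sd s) \<partial>G)) / ((1 - st) + st * (\<integral>s. 1 - sd s \<partial>G)))"
  unfolding equilibrium_def Let_def by auto

lemma alg1: fixes beta st I J mu :: real
  shows "beta * ((1 - st) + st * I) = (1 - st) * mu + st * J \<Longrightarrow> (1 - st) * (beta - mu) = st * (J - beta * I)"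
  by (simp add: algebra_simps)

lemma belief_id:
  fixes sd :: "real \<Rightarrow> real"
  assumes d: "dist_on a b G" and sdm: "sd \<in> borel_measurable borel" and sdr: "\<forall>s. sd s \<in> {0..1}"
    and pn: "(1 - st) + st * (\<integral>s. 1 - sd s \<partial>G) > 0"
    and bel: "beta = ((1 - st) * mu + st * (\<integral>s. s * (1 - sd s) \<partial>G)) / ((1 - st) + st * (\<integral>s. 1 - sd s \<partial>G))"
  shows "(1 - st) * (beta - mu) = st * (\<integral>s. (1 - sd s) * (s - beta) \<partial>G)"
proof -
  interpret prob_space G using d by (simp add: dist_on_def)
  have i1: "integrable G (\<lambda>s. s * (1 - sd s))"
    using int_sg[OF d, of "\<lambda>s. 1 - sd s"] sdm sdr by auto
  have i2: "integrable G (\<lambda>s. 1 - sd s)"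
    using sd_int[OF d sdm sdr] by auto
  have "(\<integral>s. (1 - sd s) * (s - beta) \<partial>G) = (\<integral>s. s * (1 - sd s) - beta * (1 - sd s) \<partial>G)"
    by (simp add: algebra_simps)
  also have "\<dots> = (\<integral>s. s * (1 - sd s) \<partial>G) - beta * (\<integral>s. 1 - sd s \<partial>G)"
    using i1 i2 by simp
  finally have e: "(\<integral>s. (1 - sd s) * (s - beta) \<partial>G) = (\<integral>s. s * (1 - sd s) \<partial>G) - beta * (\<integral>s. 1 - sd s \<partial>G)" .
  from bel pn have "beta * ((1 - st) + st * (\<integral>s. 1 - sd s \<partial>G)) = (1 - st) * mu + st * (\<integral>s. s * (1 - sd s) \<partial>G)"
    by (simp add: field_simps)
  then show ?thesis unfolding e by (rule alg1)
qed

lemma eqE: assumes "equilibrium a b F G pt pd st sd beta"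
  shows "st \<in> {0..1}" "sd \<in> borel_measurable borel" "\<forall>s. sd s \<in> {0..1}"
     "\<forall>s. s - pd > beta \<longrightarrow> sd s = 1"
     "\<forall>s. s - pd < beta \<longrightarrow> sd s = 0"
     "st > 0 \<longrightarrow> - pt + (\<integral>s. sd s * (s - pd) + (1 - sd s) * beta \<partial>G) \<ge> beta"
     "st < 1 \<longrightarrow> - pt + (\<integral>s. sd s * (s - pd) + (1 - sd s) * beta \<partial>G) \<le> beta"
     "beta \<in> {a..b}"
     "(1 - st) + st * (\<integral>s. 1 - sd s \<partial>G) > 0 \<longrightarrow>
        beta = ((1 - st) * (\<integral>x. x \<partial>F) + st * (\<integral>s. s * (1 - sd s) \<partial>G)) / ((1 - st) + st * (\<integral>s. 1 - sd s \<partial>G))"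
  using assms[unfolded eq_def2] by blast+



lemma R_c:
  assumes d: "dist_on a b H" and muab: "(\<integral>x. x \<partial>F) \<in> {a..b}"
    and c0: "0 < c" and cK: "c < P H (\<integral>x. x \<partial>F)"
  shows "R a b F H c 0 = c"
proof -
  interpret prob_space H using d by (simp add: dist_on_def)
  define mu where "mu = (\<integral>x. x \<partial>F)"
  have st1: "st = 1" if e: "equilibrium a b F H c 0 st sd beta" for st sd beta
  proof (rule ccontr)
    assume "st \<noteq> 1"
    with eqE(1)[OF e] have st: "0 \<le> st" "st < 1" by auto
    note E = eqE[OF e]
    have sdm: "sd \<in> borel_measurable borel" and sdr: "\<forall>s. sd s \<in> {0..1}"
      and c1: "\<forall>s. s - 0 > beta \<longrightarrow> sd s = 1" and c2: "\<forall>s. s - 0 < beta \<longrightarrow> sd s = 0" using E(2-5) by auto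
    have VT: "(\<integral>s. sd s * (s - 0) + (1 - sd s) * beta \<partial>H) = beta + P H (beta + 0)"
      by (rule VT_eq[OF d sdm sdr c1 c2])
    from E(7) st VT have "P H beta \<le> c" by auto
    with cK have "P H beta < P H mu" unfolding mu_def by simp
    hence bm: "beta > mu" using P_mono[OF d, of beta mu] by force
    have I0: "(\<integral>s. 1 - sd s \<partial>H) \<ge> 0" using sdr by (intro integral_nonneg_AE) auto
    have pn: "(1 - st) + st * (\<integral>s. 1 - sd s \<partial>H) > 0"
      using st I0 by (smt (verit) mult_nonneg_nonneg)
    with E(9) have bel: "beta = ((1 - st) * mu + st * (\<integral>s. s * (1 - sd s) \<partial>H)) / ((1 - st) + st * (\<integral>s. 1 - sd s \<partial>H))"
      unfolding mu_def by auto
    have id: "(1 - st) * (beta - mu) = st * (\<integral>s. (1 - sd s) * (s - beta) \<partial>H)"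
      by (rule belief_id[OF d sdm sdr pn bel])
    have "(\<integral>s. - ((1 - sd s) * (s - beta)) \<partial>H) \<ge> 0"
    proof (rule integral_nonneg_AE, rule AE_I2)
      fix s show "0 \<le> - ((1 - sd s) * (s - beta))"
      proof (cases "s > beta")
        case True then show ?thesis using c1 by auto
      next
        case False then show ?thesis using sdr by (auto intro: mult_nonneg_nonpos)
      qed
    qed
    hence "(\<integral>s. (1 - sd s) * (s - beta) \<partial>H) \<le> 0" by simp
    hence "st * (\<integral>s. (1 - sd s) * (s - beta) \<partial>H) \<le> 0" using st by (simp add: mult_nonneg_nonpos)
    moreover have "(1 - st) * (beta - mu) > 0" using st bm by simp
    ultimately show False using id by linarith
  qed
  define sd0 where "sd0 = (\<lambda>s::real. if a \<le> s then 1 else (0::real))"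
  have sd0m: "sd0 \<in> borel_measurable borel" unfolding sd0_def by measurable
  have sd0r: "\<forall>s. sd0 s \<in> {0..1}" unfolding sd0_def by auto
  have sd0c1: "\<forall>s. s - 0 > a \<longrightarrow> sd0 s = 1" and sd0c2: "\<forall>s. s - 0 < a \<longrightarrow> sd0 s = 0"
    unfolding sd0_def by auto
  have "a \<le> b" using muab by auto
  have pn0: "(\<integral>s. 1 - sd0 s \<partial>H) = 0"
  proof -
    have "(\<integral>s. 1 - sd0 s \<partial>H) = (\<integral>s. 0 \<partial>H)"
      using dist_AE[OF d] by (intro integral_cong_AE) (auto simp: sd0_def intro!: dist_meas[OF d] sd0m)
    then show ?thesis by simp
  qed
  have eq0: "equilibrium a b F H c 0 1 sd0 a"
    unfolding eq_def2
  proof (intro conjI)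
    have VT: "(\<integral>s. sd0 s * (s - 0) + (1 - sd0 s) * a \<partial>H) = a + P H (a + 0)"
      by (rule VT_eq[OF d sd0m sd0r sd0c1 sd0c2])
    have "P H mu \<le> P H a" using P_mono[OF d, of a mu] muab unfolding mu_def by auto
    then show "0 < (1::real) \<longrightarrow> a \<le> - c + (\<integral>s. sd0 s * (s - 0) + (1 - sd0 s) * a \<partial>H)"
      using VT cK unfolding mu_def by auto
  qed (use sd0m sd0r sd0c1 sd0c2 pn0 \<open>a \<le> b\<close> in auto)
  have X: "{revenue H c 0 st sd | st sd beta. equilibrium a b F H c 0 st sd beta} = {c}"
  proof
    show "{revenue H c 0 st sd | st sd beta. equilibrium a b F H c 0 st sd beta} \<subseteq> {c}"
      using st1 by (auto simp: revenue_def)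
    show "{c} \<subseteq> {revenue H c 0 st sd | st sd beta. equilibrium a b F H c 0 st sd beta}"
    proof -
      have "c = revenue H c 0 1 sd0 \<and> equilibrium a b F H c 0 1 sd0 a"
        using eq0 by (simp add: revenue_def)
      then show ?thesis by blast
    qed
  qed
  show ?thesis unfolding R_def X by simp
qed



lemma cdf_int:
  assumes d: "dist_on a b M" and ab: "a \<le> b"
  shows "integral {a..b} (cdf M) = b - (\<integral>x. x \<partial>M)"
proof -
  interpret prob_space M using d by (simp add: dist_on_def)
  have setsM[measurable_cong]: "sets M = sets borel" using d by (simp add: dist_on_def)
  interpret pair_sigma_finite M lborel
    by (simp add: pair_sigma_finite.intro sigma_finite_measure_axioms lborel.sigma_finite_measure_axioms)
  have monocdf: "mono (cdf M)"
    unfolding mono_def cdf_def2 by (auto intro!: finite_measure_mono simp: setsM)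
  have cdfm: "cdf M \<in> borel_measurable borel"
    using monocdf by (rule borel_measurable_mono)
  define f where "f y = indicator {a..b} y * cdf M y" for y
  have fm: "f \<in> borel_measurable borel" unfolding f_def using cdfm by measurable
  have fnn: "0 \<le> f y" for y unfolding f_def by (simp add: cdf_def2)
  define g :: "real \<times> real \<Rightarrow> ennreal" where "g z = indicator {a..b} (snd z) * indicator {..snd z} (fst z)" for z
  have gm: "g \<in> borel_measurable (M \<Otimes>\<^sub>M lborel)"
  proof -
    have sp: "space (M \<Otimes>\<^sub>M lborel) = UNIV"
      using sets_eq_imp_space_eq[OF setsM] by (simp add: space_pair_measure)
    have "{z\<in>space (M \<Otimes>\<^sub>M lborel). fst z \<le> snd z} \<in> sets (M \<Otimes>\<^sub>M lborel)" by measurable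
    then have "{z::real\<times>real. fst z \<le> snd z} \<in> sets (M \<Otimes>\<^sub>M lborel)" unfolding sp by simp
    moreover have "g = (\<lambda>z. indicator {a..b} (snd z) * indicator {z::real\<times>real. fst z \<le> snd z} z)"
      unfolding g_def by (auto simp: fun_eq_iff split: split_indicator)
    ultimately show ?thesis by simp
  qed
  have L: "(\<integral>\<^sup>+ x. g (x, y) \<partial>M) = ennreal (f y)" for y
  proof -
    have "(\<integral>\<^sup>+ x. g (x, y) \<partial>M) = indicator {a..b} y * (\<integral>\<^sup>+ x. indicator {..y} x \<partial>M)"
      unfolding g_def by (simp add: nn_integral_cmult)
    also have "\<dots> = indicator {a..b} y * emeasure M {..y}" by simp
    also have "\<dots> = ennreal (f y)"
      unfolding f_def cdf_def2 by (simp add: emeasure_eq_measure indicator_def)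
    finally show ?thesis .
  qed
  have Rx: "(\<integral>\<^sup>+ y. g (x, y) \<partial>lborel) = ennreal (b - x)" if x: "x \<in> {a..b}" for x
  proof -
    have "(\<lambda>y. g (x, y)) = indicator {x..b}"
      using x unfolding g_def by (auto simp: fun_eq_iff split: split_indicator)
    then show ?thesis using x by simp
  qed
  have "(\<integral>\<^sup>+ y. ennreal (f y) \<partial>lborel) = (\<integral>\<^sup>+ y. (\<integral>\<^sup>+ x. g (x, y) \<partial>M) \<partial>lborel)"
    using L by simp
  also have "\<dots> = (\<integral>\<^sup>+ x. (\<integral>\<^sup>+ y. g (x, y) \<partial>lborel) \<partial>M)"
    by (rule Fubini[OF gm])
  also have "\<dots> = (\<integral>\<^sup>+ x. ennreal (b - x) \<partial>M)"
    using dist_AE[OF d] Rx by (intro nn_integral_cong_AE) auto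
  also have "\<dots> = ennreal (\<integral>x. b - x \<partial>M)"
  proof (rule nn_integral_eq_integral)
    show "integrable M (\<lambda>x. b - x)" using int_id[OF d] by simp
    show "AE x in M. 0 \<le> b - x" using dist_AE[OF d] by auto
  qed
  also have "(\<integral>x. b - x \<partial>M) = b - (\<integral>x. x \<partial>M)"
    using int_id[OF d] by (simp add: prob_space)
  finally have nn: "(\<integral>\<^sup>+ y. ennreal (f y) \<partial>lborel) = ennreal (b - (\<integral>x. x \<partial>M))" .
  have r0: "0 \<le> b - (\<integral>x. x \<partial>M)" using mu_ab[OF d] by auto
  have "(f has_integral (b - (\<integral>x. x \<partial>M))) UNIV"
    by (rule nn_integral_has_integral[OF fm fnn nn r0])
  moreover have "f = (\<lambda>y. if y \<in> {a..b} then cdf M y else 0)"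
    unfolding f_def by (auto simp: fun_eq_iff)
  ultimately have "(cdf M has_integral (b - (\<integral>x. x \<partial>M))) {a..b}"
    using has_integral_restrict_UNIV[of "{a..b}" "cdf M"] by simp
  then show ?thesis by (rule integral_unique)
qed

lemma mean_pres:
  assumes F: "asset_dist a b F" and G: "MPC a b F G"
  shows "(\<integral>x. x \<partial>G) = (\<integral>x. x \<partial>F)"
proof -
  have dF: "dist_on a b F" and ab: "a \<le> b" using F by (auto simp: asset_dist_def)
  have dG: "dist_on a b G" using G by (simp add: MPC_def)
  have "integral {a..b} (cdf G) = integral {a..b} (cdf F)" using G by (simp add: MPC_def)
  then show ?thesis using cdf_int[OF dF ab] cdf_int[OF dG ab] by simp
qed



lemma int_ind: assumes d: "dist_on a b M" and S: "S \<in> sets borel" shows "integrable M (\<lambda>x. indicator S x * (e::real))"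
proof (rule dist_int[OF d, where C="\<bar>e\<bar>"])
  show "(\<lambda>x. indicator S x * e) \<in> borel_measurable borel" using S by measurable
qed (auto split: split_indicator)

lemma KF_pos: assumes F: "asset_dist a b F" shows "P F (\<integral>x. x \<partial>F) > 0"
proof -
  have dF: "dist_on a b F" and ab: "a < b" and pos: "\<forall>e>0. measure F {a..<a+e} > 0 \<and> measure F {b-e<..b} > 0"
    using F by (auto simp: asset_dist_def)
  interpret prob_space F using dF by (simp add: dist_on_def)
  have setsF: "sets F = sets borel" using dF by (simp add: dist_on_def)
  have spF: "space F = UNIV" using sets_eq_imp_space_eq[OF setsF] by simp
  define mu where "mu = (\<integral>x. x \<partial>F)"
  define e where "e = (b - a) / 2"
  have e0: "e > 0" using ab by (simp add: e_def)
  have m1: "measure F {a..<a+e} > 0" using pos e0 by auto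
  have "(\<integral>x. indicator {a..<a+e} x * e \<partial>F) \<le> (\<integral>x. b - x \<partial>F)"
  proof (rule integral_mono_AE)
    show "integrable F (\<lambda>x. indicator {a..<a+e} x * e)" by (rule int_ind[OF dF]) auto
    show "integrable F (\<lambda>x. b - x)" using int_id[OF dF] by simp
    show "AE x in F. indicator {a..<a+e} x * e \<le> b - x"
      using dist_AE[OF dF] by eventually_elim (unfold e_def, auto split: split_indicator simp: field_simps)
  qed
  moreover have "(\<integral>x. indicator {a..<a+e} x * e \<partial>F) = measure F {a..<a+e} * e"
    by (simp add: spF)
  moreover have "(\<integral>x. b - x \<partial>F) = b - mu"
    using int_id[OF dF] by (simp add: prob_space mu_def)
  ultimately have "b - mu \<ge> measure F {a..<a+e} * e" by (simp add: spF)
  moreover have "measure F {a..<a+e} * e > 0" using m1 e0 by simp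
  ultimately have mub: "mu < b" by simp
  define e' where "e' = (b - mu) / 2"
  have e'0: "e' > 0" using mub by (simp add: e'_def)
  have m2: "measure F {b-e'<..b} > 0" using pos e'0 by auto
  have "(\<integral>x. indicator {b-e'<..b} x * e' \<partial>F) \<le> (\<integral>x. max (x - mu) 0 \<partial>F)"
  proof (rule integral_mono)
    show "integrable F (\<lambda>x. indicator {b-e'<..b} x * e')" by (rule int_ind[OF dF]) auto
    show "integrable F (\<lambda>x. max (x - mu) 0)" by (rule int_max[OF dF])
    fix x show "indicator {b-e'<..b} x * e' \<le> max (x - mu) 0"
      using e'0 by (unfold e'_def, auto split: split_indicator simp: field_simps max_def)
  qed
  moreover have "(\<integral>x. indicator {b-e'<..b} x * e' \<partial>F) = measure F {b-e'<..b} * e'"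
    by (simp add: spF)
  moreover have "measure F {b-e'<..b} * e' > 0" using m2 e'0 by simp
  ultimately show ?thesis unfolding P_def mu_def by linarith
qed



lemma lim_left:
  fixes g :: "real \<Rightarrow> real"
  assumes d: "dist_on a b G" and gm: "g \<in> borel_measurable borel" and gi: "integrable G g"
  shows "((\<lambda>t. \<integral>x. indicator {..t} x * g x \<partial>G) \<longlongrightarrow> (\<integral>x. indicator {..<t0} x * g x \<partial>G)) (at_left t0)"
proof (rule tendsto_at_left_sequentially[of "t0 - 1"])
  show "t0 - 1 < t0" by simp
  fix S :: "nat \<Rightarrow> real" assume S: "\<And>n. S n < t0" "\<And>n. t0 - 1 < S n" "incseq S" "S \<longlonglongrightarrow> t0"
  show "(\<lambda>n. \<integral>x. indicator {..S n} x * g x \<partial>G) \<longlonglongrightarrow> (\<integral>x. indicator {..<t0} x * g x \<partial>G)"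
  proof (rule integral_dominated_convergence[where w="\<lambda>x. norm (g x)"])
    show "(\<lambda>x. indicator {..<t0} x * g x) \<in> borel_measurable G"
      by (rule dist_meas[OF d]) (use gm in measurable)
    show "(\<lambda>x. indicator {..S i} x * g x) \<in> borel_measurable G" for i
      by (rule dist_meas[OF d]) (use gm in measurable)
    show "integrable G (\<lambda>x. norm (g x))" using gi by simp
    show "AE x in G. norm (indicator {..S i} x * g x) \<le> norm (g x)" for i
      by (rule AE_I2) (auto split: split_indicator)
    show "AE x in G. (\<lambda>i. indicator {..S i} x * g x) \<longlonglongrightarrow> indicator {..<t0} x * g x"
    proof (rule AE_I2)
      fix x
      show "(\<lambda>i. indicator {..S i} x * g x) \<longlonglongrightarrow> indicator {..<t0} x * g x"
      proof (cases "x < t0")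
        case True
        then have "eventually (\<lambda>n. x < S n) sequentially"
          using S(4) by (rule order_tendstoD(1)[rotated])
        then have "eventually (\<lambda>n. indicator {..S n} x * g x = indicator {..<t0} x * g x) sequentially"
          by eventually_elim (use True in auto)
        then show ?thesis by (rule tendsto_eventually)
      next
        case False
        have "indicator {..S n} x * g x = indicator {..<t0} x * g x" for n
          using S(1)[of n] False by (auto split: split_indicator)
        then have e: "(\<lambda>n. indicator {..S n} x * g x) = (\<lambda>n. indicator {..<t0} x * g x)" by (rule ext)
        show ?thesis unfolding e by (rule tendsto_const)
      qed
    qed
  qed
qed

lemma lim_right:
  fixes g :: "real \<Rightarrow> real"
  assumes d: "dist_on a b G" and gm: "g \<in> borel_measurable borel" and gi: "integrable G g"
  shows "((\<lambda>t. \<integral>x. indicator {..t} x * g x \<partial>G) \<longlongrightarrow> (\<integral>x. indicator {..t0} x * g x \<partial>G)) (at_right t0)"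
proof (rule tendsto_at_right_sequentially[of t0 "t0 + 1"])
  show "t0 < t0 + 1" by simp
  fix S :: "nat \<Rightarrow> real" assume S: "\<And>n. t0 < S n" "\<And>n. S n < t0 + 1" "decseq S" "S \<longlonglongrightarrow> t0"
  show "(\<lambda>n. \<integral>x. indicator {..S n} x * g x \<partial>G) \<longlonglongrightarrow> (\<integral>x. indicator {..t0} x * g x \<partial>G)"
  proof (rule integral_dominated_convergence[where w="\<lambda>x. norm (g x)"])
    show "(\<lambda>x. indicator {..t0} x * g x) \<in> borel_measurable G"
      by (rule dist_meas[OF d]) (use gm in measurable)
    show "(\<lambda>x. indicator {..S i} x * g x) \<in> borel_measurable G" for i
      by (rule dist_meas[OF d]) (use gm in measurable)
    show "integrable G (\<lambda>x. norm (g x))" using gi by simp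
    show "AE x in G. norm (indicator {..S i} x * g x) \<le> norm (g x)" for i
      by (rule AE_I2) (auto split: split_indicator)
    show "AE x in G. (\<lambda>i. indicator {..S i} x * g x) \<longlonglongrightarrow> indicator {..t0} x * g x"
    proof (rule AE_I2)
      fix x
      show "(\<lambda>i. indicator {..S i} x * g x) \<longlonglongrightarrow> indicator {..t0} x * g x"
      proof (cases "x \<le> t0")
        case False
        then have "eventually (\<lambda>n. S n < x) sequentially"
          using S(4) by (intro order_tendstoD(2)) auto
        then have "eventually (\<lambda>n. indicator {..S n} x * g x = indicator {..t0} x * g x) sequentially"
          by eventually_elim (use False in auto)
        then show ?thesis by (rule tendsto_eventually)
      next
        case True
        have "indicator {..S n} x * g x = indicator {..t0} x * g x" for n
          using S(1)[of n] True by (auto split: split_indicator)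
        then have e: "(\<lambda>n. indicator {..S n} x * g x) = (\<lambda>n. indicator {..t0} x * g x)" by (rule ext)
        show ?thesis unfolding e by (rule tendsto_const)
      qed
    qed
  qed
qed



lemma int_ind_id: assumes d: "dist_on a b G" and A: "A \<in> sets borel"
  shows "integrable G (\<lambda>x. indicator A x * (x - c))"
proof (rule dist_int[OF d, where C="\<bar>a\<bar> + \<bar>b\<bar> + \<bar>c\<bar>"])
  show "(\<lambda>x. indicator A x * (x - c)) \<in> borel_measurable borel" using A by measurable
qed (auto split: split_indicator)

lemma int_ind1: assumes d: "dist_on a b G" and A: "A \<in> sets borel"
  shows "integrable G (\<lambda>x. indicator A x * (1::real))"
  using int_ind[OF d A, of 1] by simp

lemma split_int: assumes d: "dist_on a b G" and A: "A \<in> sets borel"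
  shows "(\<integral>x. indicator A x * (x - c) \<partial>G) = (\<integral>x. indicator A x * x \<partial>G) - c * (\<integral>x. indicator A x * 1 \<partial>G)"
proof -
  have "(\<integral>x. indicator A x * (x - c) \<partial>G) = (\<integral>x. indicator A x * (x - 0) - c * (indicator A x * 1) \<partial>G)"
    by (simp add: algebra_simps)
  also have "\<dots> = (\<integral>x. indicator A x * (x - 0) \<partial>G) - (\<integral>x. c * (indicator A x * 1) \<partial>G)"
    by (rule Bochner_Integration.integral_diff) (use int_ind_id[OF d A, of 0] int_ind1[OF d A] in auto)
  also have "\<dots> = (\<integral>x. indicator A x * x \<partial>G) - c * (\<integral>x. indicator A x * 1 \<partial>G)"
    by simp
  finally show ?thesis .
qed

lemma exist_fix:
  assumes d: "dist_on a b G" and ab: "a \<le> b" and pd: "0 \<le> pd"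
  shows "\<exists>beta sd. beta \<in> {a..b} \<and> sd \<in> borel_measurable borel \<and> (\<forall>s. sd s \<in> {0..1::real}) \<and>
     (\<forall>s. s - pd > beta \<longrightarrow> sd s = 1) \<and> (\<forall>s. s - pd < beta \<longrightarrow> sd s = 0) \<and>
     (\<integral>s. (1 - sd s) * (s - beta) \<partial>G) = 0"
proof -
  interpret prob_space G using d by (simp add: dist_on_def)
  have setsG: "sets G = sets borel" using d by (simp add: dist_on_def)
  have spG: "space G = UNIV" using sets_eq_imp_space_eq[OF setsG] by simp
  define U where "U t = (\<integral>x. indicator {..t} x * (x - (t - pd)) \<partial>G)" for t
  define L where "L t = (\<integral>x. indicator {..<t} x * (x - (t - pd)) \<partial>G)" for t
  define m where "m t = measure G {t}" for t
  have m0: "0 \<le> m t" for t unfolding m_def by simp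
  have UL: "U t = L t + pd * m t" for t
  proof -
    have "U t = (\<integral>x. indicator {..<t} x * (x - (t - pd)) + pd * indicator {t} x \<partial>G)"
      unfolding U_def by (intro Bochner_Integration.integral_cong) (auto split: split_indicator)
    also have "\<dots> = L t + (\<integral>x. pd * indicator {t} x \<partial>G)"
      unfolding L_def by (rule Bochner_Integration.integral_add) (use int_ind_id[OF d] int_ind1[OF d] in auto)
    also have "(\<integral>x. pd * indicator {t} x \<partial>G) = pd * m t"
      by (simp add: m_def spG)
    finally show ?thesis .
  qed
  have LU: "L t \<le> U t" for t using UL[of t] m0[of t] pd by simp
  have Usplit: "U t = (\<integral>x. indicator {..t} x * x \<partial>G) - (t - pd) * (\<integral>x. indicator {..t} x * 1 \<partial>G)" for t
    unfolding U_def by (rule split_int[OF d]) auto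
  have Lsplit: "L t = (\<integral>x. indicator {..<t} x * x \<partial>G) - (t - pd) * (\<integral>x. indicator {..<t} x * 1 \<partial>G)" for t
    unfolding L_def by (rule split_int[OF d]) auto
  have limL: "(U \<longlongrightarrow> L t0) (at_left t0)" for t0
  proof -
    have "((\<lambda>t. (\<integral>x. indicator {..t} x * x \<partial>G) - (t - pd) * (\<integral>x. indicator {..t} x * 1 \<partial>G)) \<longlongrightarrow>
       (\<integral>x. indicator {..<t0} x * x \<partial>G) - (t0 - pd) * (\<integral>x. indicator {..<t0} x * 1 \<partial>G)) (at_left t0)"
      by (intro tendsto_intros lim_left[OF d] int_id[OF d]) (auto simp: prob_space)
    then show ?thesis unfolding Usplit[abs_def] Lsplit .
  qed
  have limR: "(U \<longlongrightarrow> U t0) (at_right t0)" for t0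
  proof -
    have "((\<lambda>t. (\<integral>x. indicator {..t} x * x \<partial>G) - (t - pd) * (\<integral>x. indicator {..t} x * 1 \<partial>G)) \<longlongrightarrow>
       (\<integral>x. indicator {..t0} x * x \<partial>G) - (t0 - pd) * (\<integral>x. indicator {..t0} x * 1 \<partial>G)) (at_right t0)"
      by (intro tendsto_intros lim_right[OF d] int_id[OF d]) (auto simp: prob_space)
    then show ?thesis unfolding Usplit[abs_def] Usplit[of t0] .
  qed
  have Ulo: "U (a + pd) \<ge> 0"
    unfolding U_def using dist_AE[OF d]
    by (intro integral_nonneg_AE) (auto split: split_indicator)
  have Lhi: "L (b + pd) \<le> 0"
  proof -
    have "(\<integral>x. - (indicator {..<b + pd} x * (x - (b + pd - pd))) \<partial>G) \<ge> 0"
      using dist_AE[OF d] by (intro integral_nonneg_AE) (auto split: split_indicator)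
    then show ?thesis unfolding L_def by simp
  qed
  define S where "S = {t \<in> {a+pd..b+pd}. U t \<ge> 0}"
  define ts where "ts = Sup S"
  have loS: "a + pd \<in> S" using Ulo ab unfolding S_def by auto
  have bddS: "bdd_above S" unfolding S_def by (auto intro: bdd_aboveI[of _ "b + pd"])
  have SneS: "S \<noteq> {}" using loS by auto
  have ts_lo: "a + pd \<le> ts" unfolding ts_def using loS bddS by (rule cSup_upper)
  have ts_hi: "ts \<le> b + pd" unfolding ts_def using SneS by (rule cSup_least) (auto simp: S_def)
  have Uts: "U ts \<ge> 0"
  proof (rule ccontr)
    assume "\<not> U ts \<ge> 0"
    then have Lneg: "L ts < 0" using LU[of ts] by simp
    have "eventually (\<lambda>t. U t < 0) (at_left ts)"
      using limL[of ts] Lneg by (rule order_tendstoD(2))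
    then obtain b0 where b0: "b0 < ts" "\<And>y. b0 < y \<Longrightarrow> y < ts \<Longrightarrow> U y < 0"
      using eventually_at_left[of "ts - 1" ts] by auto
    have "max b0 (a + pd) < ts"
    proof -
      have "a + pd \<noteq> ts" using \<open>\<not> U ts \<ge> 0\<close> Ulo by auto
      then show ?thesis using b0(1) ts_lo by simp
    qed
    then obtain x where x: "x \<in> S" "max b0 (a + pd) < x"
      using less_cSupD[OF SneS] unfolding ts_def by blast
    have "x \<le> ts" unfolding ts_def using x(1) bddS by (rule cSup_upper)
    show False
    proof (cases "x = ts")
      case True then show False using x(1) \<open>\<not> U ts \<ge> 0\<close> by (simp add: S_def)
    next
      case False
      then have "U x < 0" using b0(2)[of x] x(2) \<open>x \<le> ts\<close> by simp
      then show False using x(1) by (simp add: S_def)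
    qed
  qed
  have Lts: "L ts \<le> 0"
  proof (cases "ts = b + pd")
    case True then show ?thesis using Lhi by simp
  next
    case False
    then have tslt: "ts < b + pd" using ts_hi by simp
    show ?thesis
    proof (rule ccontr)
      assume "\<not> L ts \<le> 0"
      then have "U ts > 0" using LU[of ts] by simp
      then have "eventually (\<lambda>t. U t > 0) (at_right ts)"
        using limR[of ts] by (intro order_tendstoD(1)) auto
      then obtain b0 where b0: "ts < b0" "\<And>y. ts < y \<Longrightarrow> y < b0 \<Longrightarrow> U y > 0"
        using eventually_at_right[of ts "ts + 1"] by auto
      define y where "y = (ts + min b0 (b + pd)) / 2"
      have y1: "ts < y" "y < b0" "y \<le> b + pd" using b0(1) tslt unfolding y_def by auto
      then have "y \<in> S" using b0(2)[of y] ts_lo unfolding S_def by auto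
      then have "y \<le> ts" unfolding ts_def using bddS by (rule cSup_upper)
      then show False using y1 by simp
    qed
  qed
  define beta where "beta = ts - pd"
  define q where "q = (if pd * m ts = 0 then 1 else 1 + L ts / (pd * m ts))"
  define sd where "sd s = (if ts < s then 1 else if s = ts then q else (0::real))" for s
  have q01: "q \<in> {0..1}"
  proof (cases "pd * m ts = 0")
    case True then show ?thesis by (simp add: q_def)
  next
    case False
    then have pm: "pd * m ts > 0" using pd m0[of ts] by (simp add: less_le)
    have "- (pd * m ts) \<le> L ts" using UL[of ts] Uts by simp
    then have "-1 \<le> L ts / (pd * m ts)" using pm by (simp add: field_simps)
    moreover have "L ts / (pd * m ts) \<le> 0" using Lts pm by (simp add: divide_nonpos_pos)
    ultimately show ?thesis using False by (simp add: q_def)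
  qed
  have sdm: "sd \<in> borel_measurable borel" unfolding sd_def by measurable
  have sdr: "\<forall>s. sd s \<in> {0..1}" using q01 by (simp add: sd_def)
  have c1: "\<forall>s. s - pd > beta \<longrightarrow> sd s = 1" by (auto simp: sd_def beta_def)
  have c2: "\<forall>s. s - pd < beta \<longrightarrow> sd s = 0" by (auto simp: sd_def beta_def)
  have "(\<integral>s. (1 - sd s) * (s - beta) \<partial>G) = (\<integral>s. indicator {..<ts} s * (s - (ts - pd)) + (1 - q) * pd * indicator {ts} s \<partial>G)"
    by (intro Bochner_Integration.integral_cong) (auto simp: sd_def beta_def split: split_indicator)
  also have "\<dots> = L ts + (\<integral>s. (1 - q) * pd * indicator {ts} s \<partial>G)"
    unfolding L_def by (rule Bochner_Integration.integral_add) (use int_ind_id[OF d] int_ind1[OF d] in auto)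
  also have "(\<integral>s. (1 - q) * pd * indicator {ts} s \<partial>G) = (1 - q) * (pd * m ts)"
    by (simp add: m_def spG)
  also have "L ts + (1 - q) * (pd * m ts) = 0"
  proof (cases "pd * m ts = 0")
    case True
    then have "U ts = L ts" by (simp only: UL[of ts] add_0_right)
    then have "L ts = 0" using Uts Lts by linarith
    then show ?thesis using True by (simp add: q_def)
  next
    case False then show ?thesis by (simp add: q_def field_simps)
  qed
  finally have bel: "(\<integral>s. (1 - sd s) * (s - beta) \<partial>G) = 0" .
  have "beta \<in> {a..b}" using ts_lo ts_hi by (simp add: beta_def)
  then show ?thesis using sdm sdr c1 c2 bel by blast
qed



lemma rev_lb:
  assumes d: "dist_on a b G" and e: "equilibrium a b F G pt pd st sd beta"
  shows "revenue G pt pd st sd \<ge> - (\<bar>pt\<bar> + \<bar>pd\<bar>)"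
proof -
  note E = eqE[OF e]
  have D: "(\<integral>s. sd s \<partial>G) \<in> {0..1}" using sd_int_bounds[OF d E(2) E(3)] .
  define D' where "D' = (\<integral>s. sd s \<partial>G)"
  have D01: "0 \<le> D'" "D' \<le> 1" using D by (auto simp: D'_def)
  have st01: "0 \<le> st" "st \<le> 1" using E(1) by auto
  have "\<bar>pd * D'\<bar> \<le> \<bar>pd\<bar>" using D01 by (simp add: abs_mult mult_left_le)
  then have "\<bar>pt + pd * D'\<bar> \<le> \<bar>pt\<bar> + \<bar>pd\<bar>" by linarith
  moreover have "\<bar>st * (pt + pd * D')\<bar> = st * \<bar>pt + pd * D'\<bar>" using st01 by (simp add: abs_mult)
  moreover have "st * \<bar>pt + pd * D'\<bar> \<le> \<bar>pt + pd * D'\<bar>" using st01 by (intro mult_left_le_one_le) auto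
  ultimately have "\<bar>st * (pt + pd * D')\<bar> \<le> \<bar>pt\<bar> + \<bar>pd\<bar>" by linarith
  then show ?thesis unfolding revenue_def D'_def by linarith
qed

lemma R_le:
  assumes d: "dist_on a b G" and e: "equilibrium a b F G pt pd st sd beta"
  shows "R a b F G pt pd \<le> revenue G pt pd st sd"
  unfolding R_def
proof (rule cInf_lower)
  show "revenue G pt pd st sd \<in> {revenue G pt pd st sd |st sd beta. equilibrium a b F G pt pd st sd beta}"
    using e by blast
  show "bdd_below {revenue G pt pd st sd |st sd beta. equilibrium a b F G pt pd st sd beta}"
    by (rule bdd_belowI[where m="- (\<bar>pt\<bar> + \<bar>pd\<bar>)"]) (use rev_lb[OF d] in blast)
qed

lemma MPC_refl: "asset_dist a b F \<Longrightarrow> MPC a b F F"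
  by (simp add: MPC_def asset_dist_def)

lemma P_shift: assumes d: "dist_on a b G" and pd: "pd < 0"
  shows "P G (mu + pd) \<le> P G mu - pd"
proof -
  interpret prob_space G using d by (simp add: dist_on_def)
  have "P G (mu + pd) \<le> (\<integral>s. max (s - mu) 0 - pd \<partial>G)"
    unfolding P_def using int_max[OF d] pd by (intro integral_mono) auto
  also have "\<dots> = P G mu - pd" unfolding P_def using int_max[OF d] by (simp add: prob_space)
  finally show ?thesis .
qed

lemma st1_transfer:
  assumes d: "dist_on a b G" and e: "equilibrium a b F G pt pd 1 sd beta" and pt': "pt' \<le> 0"
  shows "equilibrium a b F G pt' pd 1 sd beta"
proof -
  note E = eqE[OF e]
  have VT: "(\<integral>s. sd s * (s - pd) + (1 - sd s) * beta \<partial>G) = beta + P G (beta + pd)"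
    by (rule VT_eq[OF d E(2) E(3) E(4) E(5)])
  have "- pt' + (\<integral>s. sd s * (s - pd) + (1 - sd s) * beta \<partial>G) \<ge> beta"
    unfolding VT using pt' P_nonneg[of G "beta + pd"] by linarith
  then show ?thesis using E(1-5,7-9) unfolding eq_def2 by blast
qed



lemma int_split_sd:
  fixes sd :: "real \<Rightarrow> real"
  assumes d: "dist_on a b G" and sdm: "sd \<in> borel_measurable borel" and sdr: "\<forall>s. sd s \<in> {0..1}"
  shows "(\<integral>s. (1 - sd s) * (s - beta) \<partial>G) = (\<integral>s. s * (1 - sd s) \<partial>G) - beta * (\<integral>s. 1 - sd s \<partial>G)"
proof -
  interpret prob_space G using d by (simp add: dist_on_def)
  have i1: "integrable G (\<lambda>s. s * (1 - sd s))"
    using int_sg[OF d, of "\<lambda>s. 1 - sd s"] sdm sdr by auto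
  have i2: "integrable G (\<lambda>s. beta * (1 - sd s))"
    using sd_int[OF d sdm sdr] by auto
  have "(\<integral>s. (1 - sd s) * (s - beta) \<partial>G) = (\<integral>s. s * (1 - sd s) - beta * (1 - sd s) \<partial>G)"
    by (simp add: algebra_simps)
  also have "\<dots> = (\<integral>s. s * (1 - sd s) \<partial>G) - (\<integral>s. beta * (1 - sd s) \<partial>G)"
    by (rule Bochner_Integration.integral_diff[OF i1 i2])
  also have "(\<integral>s. beta * (1 - sd s) \<partial>G) = beta * (\<integral>s. 1 - sd s \<partial>G)" by simp
  finally show ?thesis .
qed

lemma alg2: fixes st bb mu K J :: real
  shows "(1 - st) * (bb - mu) = st * K \<Longrightarrow> K = mu - bb - J \<Longrightarrow> bb - mu = - st * J"
  by (simp add: algebra_simps)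

lemma caseB2:
  assumes F: "asset_dist a b F" and G: "MPC a b F G" and pt: "pt < 0" and pd: "0 \<le> pd"
    and Ppos: "P G ((\<integral>x. x \<partial>F) + pd) > 0"
  shows "R a b F G pt pd < R a b F G 0 pd"
proof -
  have dF: "dist_on a b F" and ab: "a \<le> b" using F by (auto simp: asset_dist_def)
  have dG: "dist_on a b G" using G by (simp add: MPC_def)
  interpret prob_space G using dG by (simp add: dist_on_def)
  define mu where "mu = (\<integral>x. x \<partial>F)"
  have muG: "(\<integral>x. x \<partial>G) = mu" unfolding mu_def by (rule mean_pres[OF F G])
  obtain beta sd where bab: "beta \<in> {a..b}" and sdm: "sd \<in> borel_measurable borel"
    and sdr: "\<forall>s. sd s \<in> {0..1}" and c1: "\<forall>s. s - pd > beta \<longrightarrow> sd s = 1"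
    and c2: "\<forall>s. s - pd < beta \<longrightarrow> sd s = 0" and z: "(\<integral>s. (1 - sd s) * (s - beta) \<partial>G) = 0"
    using exist_fix[OF dG ab pd] by blast
  have VT: "(\<integral>s. sd s * (s - pd) + (1 - sd s) * beta \<partial>G) = beta + P G (beta + pd)"
    by (rule VT_eq[OF dG sdm sdr c1 c2])
  have zz: "(\<integral>s. s * (1 - sd s) \<partial>G) = beta * (\<integral>s. 1 - sd s \<partial>G)"
    using z int_split_sd[OF dG sdm sdr, of beta] by simp
  have eq0: "equilibrium a b F G 0 pd 1 sd beta"
    unfolding eq_def2
  proof (intro conjI impI)
    show "beta \<le> - 0 + (\<integral>s. sd s * (s - pd) + (1 - sd s) * beta \<partial>G)"
      unfolding VT using P_nonneg[of G "beta + pd"] by simp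
    assume pn: "0 < 1 - 1 + 1 * (\<integral>s. 1 - sd s \<partial>G)"
    show "beta = ((1 - 1) * (\<integral>x. x \<partial>F) + 1 * (\<integral>s. s * (1 - sd s) \<partial>G)) / (1 - 1 + 1 * (\<integral>s. 1 - sd s \<partial>G))"
      using pn unfolding zz by simp
  qed (use sdm sdr c1 c2 bab in auto)
  have st1: "st = 1" if e: "equilibrium a b F G 0 pd st sd' beta'" for st sd' beta'
  proof (rule ccontr)
    assume "st \<noteq> 1"
    note E = eqE[OF e]
    have st: "0 \<le> st" "st < 1" using E(1) \<open>st \<noteq> 1\<close> by auto
    have VT': "(\<integral>s. sd' s * (s - pd) + (1 - sd' s) * beta' \<partial>G) = beta' + P G (beta' + pd)"
      by (rule VT_eq[OF dG E(2) E(3) E(4) E(5)])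
    have "P G (beta' + pd) \<le> 0" using E(7) st VT' by simp
    then have "P G (beta' + pd) < P G (mu + pd)" using Ppos unfolding mu_def by simp
    then have bm: "beta' > mu" using P_mono[OF dG, of "beta' + pd" "mu + pd"] by force
    have I0: "(\<integral>s. 1 - sd' s \<partial>G) \<ge> 0" using E(3) by (intro integral_nonneg_AE) auto
    have pn: "(1 - st) + st * (\<integral>s. 1 - sd' s \<partial>G) > 0"
      using st I0 by (smt (verit) mult_nonneg_nonneg)
    have bel: "beta' = ((1 - st) * mu + st * (\<integral>s. s * (1 - sd' s) \<partial>G)) / ((1 - st) + st * (\<integral>s. 1 - sd' s \<partial>G))"
      using E(9) pn unfolding mu_def by blast
    have id: "(1 - st) * (beta' - mu) = st * (\<integral>s. (1 - sd' s) * (s - beta') \<partial>G)"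
      by (rule belief_id[OF dG E(2) E(3) pn bel])
    have isd: "integrable G (\<lambda>s. sd' s * (s - beta'))"
    proof (rule dist_int[OF dG, where C="\<bar>a\<bar> + \<bar>b\<bar> + \<bar>beta'\<bar>"])
      show "(\<lambda>s. sd' s * (s - beta')) \<in> borel_measurable borel" using E(2) by measurable
      fix x :: real assume x: "x \<in> {a..b}"
      have "\<bar>sd' x * (x - beta')\<bar> = \<bar>sd' x\<bar> * \<bar>x - beta'\<bar>" by (simp add: abs_mult)
      also have "\<dots> \<le> 1 * \<bar>x - beta'\<bar>" using E(3) by (intro mult_right_mono) auto
      also have "\<dots> \<le> \<bar>a\<bar> + \<bar>b\<bar> + \<bar>beta'\<bar>" using x by auto
      finally show "\<bar>sd' x * (x - beta')\<bar> \<le> \<bar>a\<bar> + \<bar>b\<bar> + \<bar>beta'\<bar>" .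
    qed
    have "(\<integral>s. (1 - sd' s) * (s - beta') \<partial>G) = (\<integral>s. (s - beta') - sd' s * (s - beta') \<partial>G)"
      by (simp add: algebra_simps)
    also have "\<dots> = (\<integral>s. s - beta' \<partial>G) - (\<integral>s. sd' s * (s - beta') \<partial>G)"
      by (rule Bochner_Integration.integral_diff[OF _ isd]) (use int_id[OF dG] in simp)
    also have "(\<integral>s. s - beta' \<partial>G) = mu - beta'"
      using int_id[OF dG] muG by (simp add: prob_space)
    finally have e2: "(\<integral>s. (1 - sd' s) * (s - beta') \<partial>G) = mu - beta' - (\<integral>s. sd' s * (s - beta') \<partial>G)" .
    have nn: "(\<integral>s. sd' s * (s - beta') \<partial>G) \<ge> 0"
    proof (rule integral_nonneg_AE, rule AE_I2)
      fix s show "0 \<le> sd' s * (s - beta')"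
      proof (cases "s - pd < beta'")
        case True then show ?thesis using E(5) by simp
      next
        case False then show ?thesis using E(3) pd by (intro mult_nonneg_nonneg) auto
      qed
    qed
    have "beta' - mu = - st * (\<integral>s. sd' s * (s - beta') \<partial>G)" by (rule alg2[OF id e2])
    moreover have "st * (\<integral>s. sd' s * (s - beta') \<partial>G) \<ge> 0" using st nn by simp
    ultimately show False using bm by linarith
  qed
  define X where "X = {revenue G pt pd st sd |st sd beta. equilibrium a b F G pt pd st sd beta}"
  define Y where "Y = {revenue G 0 pd st sd |st sd beta. equilibrium a b F G 0 pd st sd beta}"
  have Yne: "Y \<noteq> {}" using eq0 unfolding Y_def by blast
  have "R a b F G pt pd - pt \<le> Inf Y"
  proof (rule cInf_greatest[OF Yne])
    fix y assume "y \<in> Y"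
    then obtain st sd' beta' where y: "y = revenue G 0 pd st sd'" and e: "equilibrium a b F G 0 pd st sd' beta'"
      unfolding Y_def by blast
    have "st = 1" by (rule st1[OF e])
    then have e1: "equilibrium a b F G pt pd 1 sd' beta'" using st1_transfer[OF dG _ , of F 0 pd sd' beta' pt] e pt by simp
    have "R a b F G pt pd \<le> revenue G pt pd 1 sd'" by (rule R_le[OF dG e1])
    then show "R a b F G pt pd - pt \<le> y" using y \<open>st = 1\<close> by (simp add: revenue_def)
  qed
  then show ?thesis using pt unfolding R_def Y_def by simp
qed



lemma icong: assumes d: "dist_on a b G" and f: "f \<in> borel_measurable borel" and g: "g \<in> borel_measurable borel"
  and ae: "AE x in G. f x = (g x :: real)" shows "integral\<^sup>L G f = integral\<^sup>L G g"
  by (rule integral_cong_AE[OF dist_meas[OF d f] dist_meas[OF d g] ae])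

lemma finish_r:
  assumes F: "asset_dist a b F" and G: "MPC a b F G"
    and Rr: "R a b F G pt pd \<le> r" and r: "r \<le> 0 \<or> r < P G (\<integral>x. x \<partial>F)"
  shows "\<exists>G' pt' pd'. MPC a b F G' \<and> pt' \<ge> 0 \<and> pd' \<ge> 0 \<and> R a b F G pt pd < R a b F G' pt' pd'"
proof -
  have dF: "dist_on a b F" using F by (simp add: asset_dist_def)
  have dG: "dist_on a b G" using G by (simp add: MPC_def)
  have muab: "(\<integral>x. x \<partial>F) \<in> {a..b}" by (rule mu_ab[OF dF])
  show ?thesis
  proof (cases "r \<le> 0")
    case True
    define c where "c = P F (\<integral>x. x \<partial>F) / 2"
    have K: "P F (\<integral>x. x \<partial>F) > 0" by (rule KF_pos[OF F])
    have "R a b F F c 0 = c" by (rule R_c[OF dF muab]) (use K in \<open>auto simp: c_def\<close>)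
    moreover have "c > 0" using K by (simp add: c_def)
    ultimately have "R a b F G pt pd < R a b F F c 0" using Rr True by simp
    then show ?thesis using MPC_refl[OF F] \<open>c > 0\<close> by (intro exI[of _ F] exI[of _ c] exI[of _ 0]) auto
  next
    case False
    then have r0: "0 < r" and rK: "r < P G (\<integral>x. x \<partial>F)" using r by auto
    define c where "c = (r + P G (\<integral>x. x \<partial>F)) / 2"
    have "R a b F G c 0 = c" by (rule R_c[OF dG muab]) (use r0 rK in \<open>auto simp: c_def\<close>)
    moreover have "r < c" "c > 0" using r0 rK by (auto simp: c_def)
    ultimately have "R a b F G pt pd < R a b F G c 0" using Rr by simp
    then show ?thesis using G \<open>c > 0\<close> by (intro exI[of _ G] exI[of _ c] exI[of _ 0]) auto
  qed
qed

theorem lemma2: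
  fixes a b :: real and F G :: "real measure" and pt pd :: real
  assumes "asset_dist a b F"
    and "MPC a b F G"
    and "pd < 0 \<or> pt < 0"
  shows "\<exists>G' pt' pd'. MPC a b F G' \<and> pt' \<ge> 0 \<and> pd' \<ge> 0 \<and>
           R a b F G pt pd < R a b F G' pt' pd'"
proof -
  note F = assms(1) and G = assms(2)
  have dF: "dist_on a b F" and ab: "a \<le> b" using F by (auto simp: asset_dist_def)
  have dG: "dist_on a b G" using G by (simp add: MPC_def)
  interpret prob_space G using dG by (simp add: dist_on_def)
  have setsG[measurable_cong]: "sets G = sets borel" using dG by (simp add: dist_on_def)
  define mu where "mu = (\<integral>x. x \<partial>F)"
  have muab: "mu \<in> {a..b}" unfolding mu_def by (rule mu_ab[OF dF])
  show ?thesis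
  proof (cases "pd < 0")
    case pdneg: True
    show ?thesis
    proof (cases "pt \<ge> P G (mu + pd)")
      case True
      define sd where "sd s = (if s - pd > mu then 1 else (0::real))" for s
      have sdm[measurable]: "sd \<in> borel_measurable borel" unfolding sd_def by measurable
      have sdr: "\<forall>s. sd s \<in> {0..1}" by (simp add: sd_def)
      have c1: "\<forall>s. s - pd > mu \<longrightarrow> sd s = 1" and c2: "\<forall>s. s - pd < mu \<longrightarrow> sd s = 0"
        by (auto simp: sd_def)
      have VT: "(\<integral>s. sd s * (s - pd) + (1 - sd s) * mu \<partial>G) = mu + P G (mu + pd)"
        by (rule VT_eq[OF dG sdm sdr c1 c2])
      have e: "equilibrium a b F G pt pd 0 sd mu"
        unfolding eq_def2
      proof (intro conjI impI)
        show "- pt + (\<integral>s. sd s * (s - pd) + (1 - sd s) * mu \<partial>G) \<le> mu" unfolding VT using True by simp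
        show "mu = ((1 - 0) * (\<integral>x. x \<partial>F) + 0 * (\<integral>s. s * (1 - sd s) \<partial>G)) / (1 - 0 + 0 * (\<integral>s. 1 - sd s \<partial>G))"
          by (simp add: mu_def)
      qed (use sdm sdr c1 c2 muab in auto)
      have "R a b F G pt pd \<le> 0" using R_le[OF dG e] by (simp add: revenue_def)
      then show ?thesis by (rule finish_r[OF F G]) simp
    next
      case False
      define sd where "sd s = (if s \<ge> a + pd then 1 else (0::real))" for s
      have sdm[measurable]: "sd \<in> borel_measurable borel" unfolding sd_def by measurable
      have sdr: "\<forall>s. sd s \<in> {0..1}" by (simp add: sd_def)
      have c1: "\<forall>s. s - pd > a \<longrightarrow> sd s = 1" and c2: "\<forall>s. s - pd < a \<longrightarrow> sd s = 0"
        by (auto simp: sd_def)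
      have VT: "(\<integral>s. sd s * (s - pd) + (1 - sd s) * a \<partial>G) = a + P G (a + pd)"
        by (rule VT_eq[OF dG sdm sdr c1 c2])
      have AE1: "AE s in G. sd s = 1" using dist_AE[OF dG] by eventually_elim (use pdneg in \<open>auto simp: sd_def\<close>)
      have Isd: "(\<integral>s. sd s \<partial>G) = 1"
      proof -
        have "(\<integral>s. sd s \<partial>G) = (\<integral>s. 1 \<partial>G)"
        proof (rule icong[OF dG])
          show "(\<lambda>s. sd s) \<in> borel_measurable borel" using sdm by measurable
          show "(\<lambda>s. 1) \<in> borel_measurable borel" using sdm by measurable
          show "AE s in G. sd s = 1" using AE1 by eventually_elim simp
        qed
        then show ?thesis by (simp add: prob_space)
      qed
      have I1: "(\<integral>s. 1 - sd s \<partial>G) = 0"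
      proof -
        have "(\<integral>s. 1 - sd s \<partial>G) = (\<integral>s. 0 \<partial>G)"
        proof (rule icong[OF dG])
          show "(\<lambda>s. 1 - sd s) \<in> borel_measurable borel" using sdm by measurable
          show "(\<lambda>s. 0) \<in> borel_measurable borel" using sdm by measurable
          show "AE s in G. 1 - sd s = 0" using AE1 by eventually_elim simp
        qed
        then show ?thesis by simp
      qed
      have "P G (mu + pd) \<le> P G (a + pd)" using P_mono[OF dG, of "a + pd" "mu + pd"] muab by simp
      then have ptle: "pt \<le> P G (a + pd)" using False by simp
      have e: "equilibrium a b F G pt pd 1 sd a"
        unfolding eq_def2
      proof (intro conjI impI)
        show "a \<le> - pt + (\<integral>s. sd s * (s - pd) + (1 - sd s) * a \<partial>G)" unfolding VT using ptle by simp
        assume "0 < 1 - 1 + 1 * (\<integral>s. 1 - sd s \<partial>G)"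
        then show "a = ((1 - 1) * (\<integral>x. x \<partial>F) + 1 * (\<integral>s. s * (1 - sd s) \<partial>G)) / (1 - 1 + 1 * (\<integral>s. 1 - sd s \<partial>G))"
          using I1 by simp
      qed (use sdm sdr c1 c2 ab in auto)
      have Rr: "R a b F G pt pd \<le> pt + pd" using R_le[OF dG e] Isd by (simp add: revenue_def)
      have "pt + pd < P G mu" using P_shift[OF dG pdneg, of mu] False by simp
      then show ?thesis by (intro finish_r[OF F G Rr]) (simp add: mu_def)
    qed
  next
    case False
    then have pd0: "0 \<le> pd" and ptneg: "pt < 0" using assms(3) by auto
    show ?thesis
    proof (cases "P G (mu + pd) = 0")
      case P0: True
      have muG: "(\<integral>x. x \<partial>G) = mu" unfolding mu_def by (rule mean_pres[OF F G])
      define sd where "sd s = (if s - pd > mu then 1 else (0::real))" for s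
      have sdm[measurable]: "sd \<in> borel_measurable borel" unfolding sd_def by measurable
      have sdr: "\<forall>s. sd s \<in> {0..1}" by (simp add: sd_def)
      have c1: "\<forall>s. s - pd > mu \<longrightarrow> sd s = 1" and c2: "\<forall>s. s - pd < mu \<longrightarrow> sd s = 0"
        by (auto simp: sd_def)
      have VT: "(\<integral>s. sd s * (s - pd) + (1 - sd s) * mu \<partial>G) = mu + P G (mu + pd)"
        by (rule VT_eq[OF dG sdm sdr c1 c2])
      have "AE s in G. max (s - (mu + pd)) 0 = 0"
        using P0 unfolding P_def by (subst (asm) integral_nonneg_eq_0_iff_AE) (auto intro: int_max[OF dG])
      then have AE0: "AE s in G. sd s = 0" by eventually_elim (auto simp: sd_def)
      have I1: "(\<integral>s. 1 - sd s \<partial>G) = 1"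
      proof -
        have "(\<integral>s. 1 - sd s \<partial>G) = (\<integral>s. 1 \<partial>G)"
        proof (rule icong[OF dG])
          show "(\<lambda>s. 1 - sd s) \<in> borel_measurable borel" using sdm by measurable
          show "(\<lambda>s. 1) \<in> borel_measurable borel" using sdm by measurable
          show "AE s in G. 1 - sd s = 1" using AE0 by eventually_elim simp
        qed
        then show ?thesis by (simp add: prob_space)
      qed
      have Isd: "(\<integral>s. sd s \<partial>G) = 0"
      proof -
        have "(\<integral>s. sd s \<partial>G) = (\<integral>s. 0 \<partial>G)"
        proof (rule icong[OF dG])
          show "(\<lambda>s. sd s) \<in> borel_measurable borel" using sdm by measurable
          show "(\<lambda>s. 0) \<in> borel_measurable borel" using sdm by measurable
          show "AE s in G. sd s = 0" using AE0 by eventually_elim simp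
        qed
        then show ?thesis by simp
      qed
      have Is: "(\<integral>s. s * (1 - sd s) \<partial>G) = mu"
      proof -
        have "(\<integral>s. s * (1 - sd s) \<partial>G) = (\<integral>s. s \<partial>G)"
        proof (rule icong[OF dG])
          show "(\<lambda>s. s * (1 - sd s)) \<in> borel_measurable borel" using sdm by measurable
          show "(\<lambda>s. s) \<in> borel_measurable borel" using sdm by measurable
          show "AE s in G. s * (1 - sd s) = s" using AE0 by eventually_elim simp
        qed
        then show ?thesis using muG by simp
      qed
      have e: "equilibrium a b F G pt pd 1 sd mu"
        unfolding eq_def2
      proof (intro conjI impI)
        show "mu \<le> - pt + (\<integral>s. sd s * (s - pd) + (1 - sd s) * mu \<partial>G)" unfolding VT using ptneg P0 by simp
        show "mu = ((1 - 1) * (\<integral>x. x \<partial>F) + 1 * (\<integral>s. s * (1 - sd s) \<partial>G)) / (1 - 1 + 1 * (\<integral>s. 1 - sd s \<partial>G))"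
          using I1 Is by simp
      qed (use sdm sdr c1 c2 muab in auto)
      have "R a b F G pt pd \<le> pt" using R_le[OF dG e] Isd by (simp add: revenue_def)
      then show ?thesis by (rule finish_r[OF F G]) (use ptneg in simp)
    next
      case False
      then have "P G (mu + pd) > 0" using P_nonneg[of G "mu + pd"] by simp
      then have "R a b F G pt pd < R a b F G 0 pd"
        by (intro caseB2[OF F G ptneg pd0]) (simp add: mu_def)
      then show ?thesis using G pd0 by (intro exI[of _ G] exI[of _ 0] exI[of _ pd]) auto
    qed
  qed
qed


end
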